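(* If $\frac12<p\le t\le\frac23$, then bold play is not optimal, i.e. $\pi(p,t)>p$.
   Context: Let $\beta_1,\beta_2,\ldots$ be independent Bernoulli random variables with success probability $p$. A stake sequence is a sequence $\gamma=(c_1,c_2,\ldots)$ of non-negative reals with $c_1\ge c_2\ge\cdots$ and $\sum_i c_i=1$; write $S_\gamma=\sum_i c_i\beta_i$. For $0\le p\le t\le 1$ define $\pi(p,t)=\sup\{\mathbf P(S_\gamma\ge t)\mid \gamma \text{ a stake sequence}\}$. Bold play for threshold $t$ is the stake sequence with $c_i=\frac1m$ for $i\le m$ and $c_i=0$ for $i>m$, where $m=\lfloor 1/t\rfloor$; it is optimal if it attains $\pi(p,t)$. For $t>\frac12$ bold play is $c_1=1$, with success probability $p$. *)

theory Defs
  imports "HOL-Probability.Probability"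
begin

text \<open>Independent Bernoulli(p) variables beta_1, beta_2, ... realised as coordinates of the
infinite product space (indices shifted to start at 0).\<close>
definition bern_space :: "real \<Rightarrow> (nat \<Rightarrow> bool) measure" where
  "bern_space p = PiM UNIV (\<lambda>_. measure_pmf (bernoulli_pmf p))"

definition stake_seq :: "(nat \<Rightarrow> real) \<Rightarrow> bool" where
  "stake_seq c \<longleftrightarrow> (\<forall>i. 0 \<le> c i) \<and> antimono c \<and> c sums 1"

definition S_gamma :: "(nat \<Rightarrow> real) \<Rightarrow> (nat \<Rightarrow> bool) \<Rightarrow> real" where
  "S_gamma c \<omega> = (\<Sum>i. c i * (if \<omega> i then 1 else 0))"

definition succ_prob :: "real \<Rightarrow> real \<Rightarrow> (nat \<Rightarrow> real) \<Rightarrow> real" where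
  "succ_prob p t c = measure (bern_space p) {\<omega> \<in> space (bern_space p). S_gamma c \<omega> \<ge> t}"

definition pi_opt :: "real \<Rightarrow> real \<Rightarrow> real" where
  "pi_opt p t = Sup {succ_prob p t c | c. stake_seq c}"

end

theory Submission
  imports Defs
begin

abbreviation "BM p \<equiv> (\<lambda>_::nat. measure_pmf (bernoulli_pmf p))"

lemma bern_prob: "prob_space (bern_space p)"
  unfolding bern_space_def by (rule prob_space_PiM) (simp add: prob_space_measure_pmf)

lemma space_bern: "space (bern_space p) = UNIV"
  unfolding bern_space_def by (simp add: space_PiM)

lemma cyl_meas:
  assumes "0 \<le> p" "p \<le> 1"
  shows "measure (bern_space p) {x. x 0 = a \<and> x 1 = b \<and> x 2 = c}
     = pmf (bernoulli_pmf p) a * pmf (bernoulli_pmf p) b * pmf (bernoulli_pmf p) c"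
proof -
  interpret product_prob_space "BM p" UNIV
    by unfold_locales
  have "emeasure (Pi\<^sub>M UNIV (BM p)) {x\<in>space (Pi\<^sub>M UNIV (BM p)). \<forall>i\<in>{0,1,2}. x i \<in> (\<lambda>i. {if i = 0 then a else if i = 1 then b else c}) i}
     = (\<Prod>i\<in>{0,1,2}. emeasure (BM p i) ((\<lambda>i. {if i = 0 then a else if i = 1 then b else c}) i))"
    by (rule emeasure_PiM_Collect) auto
  moreover have "{x\<in>space (Pi\<^sub>M UNIV (BM p)). \<forall>i\<in>{0::nat,1,2}. x i \<in> (\<lambda>i. {if i = 0 then a else if i = 1 then b else c}) i}
     = {x. x 0 = a \<and> x 1 = b \<and> x 2 = c}"
    by (auto simp: space_PiM)
  ultimately have "emeasure (bern_space p) {x. x 0 = a \<and> x 1 = b \<and> x 2 = c}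
     = ennreal (pmf (bernoulli_pmf p) a * pmf (bernoulli_pmf p) b * pmf (bernoulli_pmf p) c)"
    by (simp add: bern_space_def emeasure_pmf_single prod_ennreal ennreal_mult'' mult.assoc)
  then show ?thesis
    by (simp add: measure_def)
qed

lemma cyl_sets: "{x. x 0 = a \<and> x 1 = b \<and> x 2 = c} \<in> sets (bern_space p)"
proof -
  have "Measurable.pred (bern_space p) (\<lambda>x. x 0 = a \<and> x 1 = b \<and> x 2 = c)"
    unfolding bern_space_def by measurable
  then show ?thesis by (simp add: pred_def space_bern)
qed

theorem corollary17:
  fixes p t :: real
  assumes "1/2 < p" and "p \<le> t" and "t \<le> 2/3"
  shows "pi_opt p t > p"
proof -
  interpret P: prob_space "bern_space p" by (rule bern_prob)
  define c :: "nat \<Rightarrow> real" where "c i = (if i < 3 then 1/3 else 0)" for i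
  have sc: "stake_seq c"
    unfolding stake_seq_def
  proof (intro conjI)
    show "\<forall>i. 0 \<le> c i" by (simp add: c_def)
    show "antimono c" unfolding antimono_def c_def by auto
    have "c sums (\<Sum>i<3. c i)"
      by (rule sums_finite) (auto simp: c_def)
    then show "c sums 1" by (simp add: c_def numeral_3_eq_3)
  qed
  have S: "S_gamma c \<omega> = (\<Sum>i<3. c i * (if \<omega> i then 1 else 0))" for \<omega>
    unfolding S_gamma_def by (rule suminf_finite) (auto simp: c_def)
  let ?E = "\<lambda>a b d. {x::nat\<Rightarrow>bool. x 0 = a \<and> x 1 = b \<and> x 2 = d}"
  have A: "{\<omega> \<in> space (bern_space p). S_gamma c \<omega> \<ge> t}
      = ((?E True True True \<union> ?E True True False) \<union> ?E True False True) \<union> ?E False True True"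
  proof -
    have "S_gamma c \<omega> \<ge> t \<longleftrightarrow> (\<omega> 0 \<and> \<omega> 1) \<or> (\<omega> 0 \<and> \<omega> 2) \<or> (\<omega> 1 \<and> \<omega> 2)" for \<omega>
      using assms by (simp add: S c_def numeral_3_eq_3 numeral_2_eq_2 lessThan_Suc)
    then show ?thesis by (auto simp: space_bern)
  qed
  have p01: "0 \<le> p" "p \<le> 1" using assms by auto
  have "succ_prob p t c = p*p*p + p*p*(1-p) + p*(1-p)*p + (1-p)*p*p"
  proof -
    have e: "?E a b d \<in> P.events" for a b d by (rule cyl_sets)
    have m: "P.prob (?E a b d) = pmf (bernoulli_pmf p) a * pmf (bernoulli_pmf p) b * pmf (bernoulli_pmf p) d" for a b d
      by (rule cyl_meas[OF p01])
    have "P.prob (((?E True True True \<union> ?E True True False) \<union> ?E True False True) \<union> ?E False True True)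
      = P.prob ((?E True True True \<union> ?E True True False) \<union> ?E True False True) + P.prob (?E False True True)"
      by (rule P.finite_measure_Union) (blast intro: sets.Un e)+
    also have "P.prob ((?E True True True \<union> ?E True True False) \<union> ?E True False True)
      = P.prob (?E True True True \<union> ?E True True False) + P.prob (?E True False True)"
      by (rule P.finite_measure_Union) (blast intro: sets.Un e)+
    also have "P.prob (?E True True True \<union> ?E True True False)
      = P.prob (?E True True True) + P.prob (?E True True False)"
      by (rule P.finite_measure_Union) (blast intro: sets.Un e)+
    finally show ?thesis unfolding succ_prob_def A m using p01 by simp
  qed
  also have "\<dots> > p"
  proof -
    have "p*p*p + p*p*(1-p) + p*(1-p)*p + (1-p)*p*p - p = p*(2*p-1)*(1-p)"
      by (simp add: algebra_simps)
    moreover have "p*(2*p-1)*(1-p) > 0" using assms by (auto intro!: mult_pos_pos)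
    ultimately show ?thesis by linarith
  qed
  finally have gt: "succ_prob p t c > p" .
  have "succ_prob p t c \<le> pi_opt p t"
    unfolding pi_opt_def
  proof (rule cSup_upper)
    show "succ_prob p t c \<in> {succ_prob p t c |c. stake_seq c}" using sc by blast
    show "bdd_above {succ_prob p t c |c. stake_seq c}"
      by (rule bdd_aboveI[of _ 1]) (auto simp: succ_prob_def)
  qed
  with gt show ?thesis by linarith
qed

end
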